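(* Let $p\equiv 3\pmod 4$ be prime and let $O_2^-(\mathbb{F}_p)=\{g\in GL_2(\mathbb{F}_p): g^Tg=I_2\}$, a group of order $2p+2$; enumerate its elements as $h_0,\dots,h_{2p+1}$. For $h\in O_2^-(\mathbb{F}_p)$ and $f\in\mathbb{F}_p[x_1,x_2,y_1,y_2]$, let $h\ast f$ denote the result of substituting $(x_1,x_2)^T\mapsto h(x_1,x_2)^T$ while fixing $y_1,y_2$. Let $u=x_1y_1+x_2y_2$, $\operatorname{Tr}(f)=\sum_{g\in O_2^-(\mathbb{F}_p)} g\cdot f$ (where $g\cdot$ acts simultaneously by $(x_1,x_2)^T\mapsto g(x_1,x_2)^T$, $(y_1,y_2)^T\mapsto g(y_1,y_2)^T$), and $f_i=u^i$ ($0\le i\le p+1$), $f_{p+1+j}=\operatorname{Tr}(x_1^{p+1-j}y_1^j)$ ($1\le j\le p$). Then $$\det\big(h_i\ast f_j\big)_{0\le i,j\le 2p+1}\neq 0$$ in $\mathbb{F}_p[x_1,x_2,y_1,y_2]$.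
   Context: The elements $(h_i,1)$ form a set of left coset representatives of $O_2^-(\mathbb{F}_p)\times O_2^-(\mathbb{F}_p)$ modulo the diagonally embedded $O_2^-(\mathbb{F}_p)$, and this determinant is the Jacobian determinant of the covariants $\omega_j=\sum_{g\in G/O_2^-}g(f_j)\otimes g$ in the sense of Broer–Chuai; the claim is equivalently that this Jacobian is nonzero. *)

theory Defs
  imports "HOL-Library.Poly_Mapping" "Jordan_Normal_Form.Determinant"
begin

text \<open>Multivariate polynomials over 'a: finitely supported maps from monomials
  (exponent vectors) to coefficients. Variables: x1 = 0, x2 = 1, y1 = 2, y2 = 3.\<close>

type_synonym 'a mpoly = "(nat \<Rightarrow>\<^sub>0 nat) \<Rightarrow>\<^sub>0 'a"

definition mvar :: "nat \<Rightarrow> 'a::comm_ring_1 mpoly" where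
  "mvar i = Poly_Mapping.single (Poly_Mapping.single i 1) 1"

definition mconst :: "'a::comm_ring_1 \<Rightarrow> 'a mpoly" where
  "mconst c = Poly_Mapping.single 0 c"

definition msubst :: "(nat \<Rightarrow> 'a::comm_ring_1 mpoly) \<Rightarrow> 'a mpoly \<Rightarrow> 'a mpoly" where
  "msubst \<sigma> f = (\<Sum>m\<in>Poly_Mapping.keys f. mconst (Poly_Mapping.lookup f m) * (\<Prod>i\<in>Poly_Mapping.keys m. \<sigma> i ^ Poly_Mapping.lookup m i))"

definition O2 :: "'a::field mat set" where
  "O2 = {g \<in> carrier_mat 2 2. invertible_mat g \<and> transpose_mat g * g = 1\<^sub>m 2}"

definition act_x :: "'a::field mat \<Rightarrow> 'a mpoly \<Rightarrow> 'a mpoly" where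
  "act_x h f = msubst (\<lambda>i. if i < 2 then (\<Sum>j<2. mconst (h $$ (i, j)) * mvar j) else mvar i) f"

definition act_xy :: "'a::field mat \<Rightarrow> 'a mpoly \<Rightarrow> 'a mpoly" where
  "act_xy g f = msubst (\<lambda>i. if i < 2 then (\<Sum>j<2. mconst (g $$ (i, j)) * mvar j)
      else if i < 4 then (\<Sum>j<2. mconst (g $$ (i - 2, j)) * mvar (j + 2)) else mvar i) f"

definition Tr :: "'a::field mpoly \<Rightarrow> 'a mpoly" where
  "Tr f = (\<Sum>g\<in>O2. act_xy g f)"

definition u_inv :: "'a::field mpoly" where
  "u_inv = mvar 0 * mvar 2 + mvar 1 * mvar 3"

definition fpoly :: "nat \<Rightarrow> nat \<Rightarrow> 'a::field mpoly" where
  "fpoly p i = (if i \<le> p + 1 then u_inv ^ i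
      else (let j = i - (p + 1) in Tr (mvar 0 ^ (p + 1 - j) * mvar 2 ^ j)))"

end

theory Submission
  imports Defs "HOL-Algebra.Algebraic_Closure_Type" "HOL-Number_Theory.Residues"
begin

hide_const (open) Divisibility.prime UnivPoly.monom UnivPoly.coeff

definition mmon :: "(nat \<Rightarrow> 'b::comm_ring_1) \<Rightarrow> (nat \<Rightarrow>\<^sub>0 nat) \<Rightarrow> 'b" where
  "mmon \<sigma> m = (\<Prod>i\<in>Poly_Mapping.keys m. \<sigma> i ^ Poly_Mapping.lookup m i)"

definition ev :: "(nat \<Rightarrow> 'a::field alg_closure) \<Rightarrow> 'a mpoly \<Rightarrow> 'a alg_closure" where
  "ev \<sigma> f = (\<Sum>m\<in>Poly_Mapping.keys f. to_ac (Poly_Mapping.lookup f m) * mmon \<sigma> m)"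

lemma mmon_superset:
  assumes "finite S" "Poly_Mapping.keys m \<subseteq> S"
  shows "mmon \<sigma> m = (\<Prod>i\<in>S. \<sigma> i ^ Poly_Mapping.lookup m i)"
  unfolding mmon_def
  by (rule prod.mono_neutral_left) (use assms in \<open>auto simp: in_keys_iff\<close>)

lemma mmon_add: "mmon \<sigma> (m1 + m2) = mmon \<sigma> m1 * mmon \<sigma> m2"
proof -
  let ?S = "Poly_Mapping.keys m1 \<union> Poly_Mapping.keys m2"
  have k: "Poly_Mapping.keys (m1 + m2) \<subseteq> ?S" by (rule keys_add)
  show ?thesis
    by (subst (1 2 3) mmon_superset[of ?S]) (use k in \<open>auto simp: lookup_add power_add prod.distrib\<close>)
qed

lemma mmon_zero: "mmon \<sigma> 0 = 1"
  by (simp add: mmon_def)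

lemma ev_superset:
  assumes "finite S" "Poly_Mapping.keys f \<subseteq> S"
  shows "ev \<sigma> f = (\<Sum>m\<in>S. to_ac (Poly_Mapping.lookup f m) * mmon \<sigma> m)"
  unfolding ev_def
  by (rule sum.mono_neutral_left) (use assms in \<open>auto simp: in_keys_iff\<close>)

lemma ev_add: "ev \<sigma> (f + g) = ev \<sigma> f + ev \<sigma> g"
proof -
  let ?S = "Poly_Mapping.keys f \<union> Poly_Mapping.keys g"
  have k: "Poly_Mapping.keys (f + g) \<subseteq> ?S" by (rule keys_add)
  show ?thesis
    by (subst (1 2 3) ev_superset[of ?S]) (use k in \<open>auto simp: lookup_add distrib_right sum.distrib\<close>)
qed

lemma ev_zero: "ev \<sigma> 0 = 0"
  by (simp add: ev_def)

lemma ev_single: "ev \<sigma> (Poly_Mapping.single m c) = to_ac c * mmon \<sigma> m"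
  by (subst ev_superset[of "{m}"]) auto

lemma ev_sum: "ev \<sigma> (\<Sum>x\<in>A. F x) = (\<Sum>x\<in>A. ev \<sigma> (F x))"
  by (induction A rule: infinite_finite_induct) (auto simp: ev_zero ev_add)

lemma mpoly_decomp: "f = (\<Sum>m\<in>Poly_Mapping.keys f. Poly_Mapping.single m (Poly_Mapping.lookup f m))"
  by (rule poly_mapping_eqI)
     (auto simp: lookup_sum lookup_single when_def in_keys_iff sum.delta' )

lemma ev_mult: "ev \<sigma> (f * g) = ev \<sigma> f * ev \<sigma> g"
proof -
  have "f * g = (\<Sum>m\<in>Poly_Mapping.keys f. Poly_Mapping.single m (Poly_Mapping.lookup f m)) *
     (\<Sum>m\<in>Poly_Mapping.keys g. Poly_Mapping.single m (Poly_Mapping.lookup g m))"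
    by (subst (1) mpoly_decomp[of f], subst (1) mpoly_decomp[of g]) (rule refl)
  also have "\<dots> = (\<Sum>m\<in>Poly_Mapping.keys f. \<Sum>m'\<in>Poly_Mapping.keys g.
     Poly_Mapping.single (m + m') (Poly_Mapping.lookup f m * Poly_Mapping.lookup g m'))"
    unfolding sum_product by (simp add: mult_single)
  finally have "ev \<sigma> (f * g) = (\<Sum>m\<in>Poly_Mapping.keys f. \<Sum>m'\<in>Poly_Mapping.keys g.
     to_ac (Poly_Mapping.lookup f m) * mmon \<sigma> m * (to_ac (Poly_Mapping.lookup g m') * mmon \<sigma> m'))"
    by (simp add: ev_sum ev_single mmon_add mult_ac)
  also have "\<dots> = ev \<sigma> f * ev \<sigma> g"
    unfolding ev_def sum_product by simp
  finally show ?thesis .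
qed

lemma ev_one: "ev \<sigma> 1 = 1"
proof -
  have "ev \<sigma> 1 = ev \<sigma> (Poly_Mapping.single 0 1)" by simp
  also have "\<dots> = 1" unfolding ev_single mmon_zero by simp
  finally show ?thesis .
qed

lemma ev_hom: "comm_ring_hom (ev \<sigma>)"
proof
  show "ev \<sigma> 0 = 0" by (rule ev_zero)
  show "ev \<sigma> 1 = 1" by (rule ev_one)
  show "ev \<sigma> (x + y) = ev \<sigma> x + ev \<sigma> y" for x y by (rule ev_add)
  show "ev \<sigma> (x * y) = ev \<sigma> x * ev \<sigma> y" for x y by (rule ev_mult)
qed


lemma ev_prod: "ev \<sigma> (\<Prod>x\<in>A. F x) = (\<Prod>x\<in>A. ev \<sigma> (F x))"
  by (induction A rule: infinite_finite_induct) (auto simp: ev_one ev_mult)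

lemma ev_power: "ev \<sigma> (x ^ n) = ev \<sigma> x ^ n"
  by (induction n) (auto simp: ev_one ev_mult)

lemma ev_mvar: "ev \<sigma> (mvar i) = \<sigma> i"
  unfolding mvar_def ev_single mmon_def by simp

lemma ev_mconst: "ev \<sigma> (mconst c) = to_ac c"
  unfolding mconst_def ev_single mmon_zero by simp

lemma ev_msubst: "ev \<sigma> (msubst \<tau> f) = ev (\<lambda>i. ev \<sigma> (\<tau> i)) f"
  unfolding msubst_def ev_sum ev_mult ev_prod ev_power ev_mconst
  by (simp add: ev_def mmon_def)

lemma ev_act_x: "ev \<sigma> (act_x h f) =
   ev (\<lambda>i. if i < 2 then (\<Sum>j<2. to_ac (h $$ (i, j)) * \<sigma> j) else \<sigma> i) f"
  unfolding act_x_def ev_msubst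
  by (rule arg_cong[where f="\<lambda>s. ev s f"]) (auto simp: ev_sum ev_mult ev_mconst ev_mvar)

lemma ev_act_xy: "ev \<sigma> (act_xy h f) =
   ev (\<lambda>i. if i < 2 then (\<Sum>j<2. to_ac (h $$ (i, j)) * \<sigma> j)
      else if i < 4 then (\<Sum>j<2. to_ac (h $$ (i - 2, j)) * \<sigma> (j + 2)) else \<sigma> i) f"
  unfolding act_xy_def ev_msubst
  by (rule arg_cong[where f="\<lambda>s. ev s f"]) (auto simp: ev_sum ev_mult ev_mconst ev_mvar)


definition ii :: "'a::field alg_closure" where
  "ii = (SOME i. i * i = -1)"

lemma ii_sq: "ii * ii = (-1 :: 'a::field alg_closure)"
proof -
  have "\<exists>x::'a alg_closure. (\<Sum>k\<le>2. (if k = 1 then 0 else 1) * x ^ k) = 0"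
    by (rule alg_closed) auto
  then obtain x :: "'a alg_closure" where "(\<Sum>k\<le>2. (if k = 1 then 0 else 1) * x ^ k) = 0" by blast
  then have "1 + x * x = 0" by (simp add: eval_nat_numeral power2_eq_square)
  then have "x * x = -1" by (simp add: eq_neg_iff_add_eq_0 add.commute)
  then show ?thesis unfolding ii_def by (rule someI)
qed

lemma ii_sq2: "ii * (ii * x) = - (x :: 'a::field alg_closure)"
  by (simp add: mult.assoc[symmetric] ii_sq)

locale ffield =
  fixes p :: nat and ty :: "'a::field itself"
  assumes p_prime: "prime p" and p_mod: "p mod 4 = 3" and card_p: "card (UNIV :: 'a set) = p"
begin

lemma fin: "finite (UNIV :: 'a set)"
proof (rule ccontr)
  assume "infinite (UNIV :: 'a set)"
  then have "p = 0" using card_p by simp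
  then show False using p_prime by simp
qed

lemma pow_p: "(x::'a) ^ p = x"
proof (cases "x = 0")
  case False
  have "x * (\<Prod>y\<in>UNIV-{0}. x * y) = x * x ^ (card (UNIV :: 'a set) - 1) * \<Prod>(UNIV-{0})"
    using fin by (simp add: prod.distrib mult_ac card_Diff_subset)
  also have "x * x ^ (card (UNIV :: 'a set) - 1) = x ^ Suc (card (UNIV :: 'a set) - 1)"
    by (subst power_Suc) auto
  also have "Suc (card (UNIV :: 'a set) - 1) = card (UNIV :: 'a set)"
    using card_p p_prime prime_gt_0_nat by simp
  also have "(\<Prod>y\<in>UNIV-{0}. x * y) = (\<Prod>y\<in>UNIV-{0}. y)"
    by (rule prod.reindex_bij_witness[of _ "\<lambda>y. y / x" "\<lambda>y. x * y"]) (use False in auto)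
  finally show ?thesis
    using card_p fin by simp
qed (use card_p p_prime prime_gt_0_nat in auto)

lemma char_p: "CHAR('a) = p"
proof -
  have "CHAR('a) dvd p" using CHAR_dvd_CARD[where ?'a='a] card_p by simp
  moreover have "prime CHAR('a)"
    by (rule prime_CHAR_semidom) (rule finite_imp_CHAR_pos[OF fin])
  ultimately show ?thesis using p_prime primes_dvd_imp_eq by blast
qed

lemma p_ge3: "p \<ge> 3" using p_mod by presburger

lemma two_ne0: "(2::'a) \<noteq> 0"
proof
  assume "(2::'a) = 0"
  then have "of_nat 2 = (0::'a)" by simp
  then have "p dvd 2" using of_nat_eq_0_iff_char_dvd[where ?'a='a] char_p by metis
  then show False using p_ge3 by (auto dest: dvd_imp_le)
qed

lemma no_sqrt_m1: "(x::'a) * x \<noteq> -1"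
proof
  assume h: "x * x = -1"
  then have "x \<noteq> 0" by auto
  obtain q where q: "p = 4 * q + 3" using p_mod by (metis mod_mult_div_eq add.commute mult.commute)
  have pS: "p = Suc (p - 1)" using p_ge3 by simp
  have "x ^ p = x * x ^ (p - 1)" by (subst pS) (simp only: power_Suc)
  then have "x * x ^ (p - 1) = x * 1" using pow_p by simp
  then have 1: "x ^ (p - 1) = 1" using \<open>x \<noteq> 0\<close> by (metis mult_left_cancel)
  have e: "p - 1 = 2 * (2 * q + 1)" using q by simp
  have "x ^ (p - 1) = (x ^ 2) ^ (2 * q + 1)" unfolding e by (simp only: power_mult)
  also have "\<dots> = (-1) ^ (2 * q + 1)" using h by (simp add: power2_eq_square)
  also have "\<dots> = -1" by simp
  finally have "(1::'a) = -1" using 1 by simp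
  then have "(2::'a) = 0" by (metis one_add_one add.inverse_inverse eq_neg_iff_add_eq_0)
  then show False using two_ne0 by simp
qed

lemma char_L: "CHAR('a alg_closure) = p"
  using char_p by simp

lemma ii_notin: "ii \<noteq> to_ac (x::'a)"
proof
  assume "ii = to_ac x"
  then have "to_ac (x * x) = to_ac (-1::'a)" using ii_sq[where ?'a='a]
    by (simp only: to_ac_mult to_ac_minus to_ac_1)
  then have "x * x = -1" by (simp only: to_ac_eq_iff)
  then show False using no_sqrt_m1 by blast
qed

lemma ii_pow_p: "(ii :: 'a alg_closure) ^ p = - ii"
proof -
  obtain q where q: "p = 4 * q + 3" using p_mod by (metis mod_mult_div_eq add.commute mult.commute)
  have e: "p = Suc (2 * (2 * q + 1))" using q by simp
  have "(ii :: 'a alg_closure) ^ p = ii * (ii ^ 2) ^ (2 * q + 1)"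
    unfolding e by (simp only: power_Suc power_mult)
  also have "\<dots> = ii * (-1) ^ (2 * q + 1)" using ii_sq[where ?'a='a] by (simp add: power2_eq_square)
  also have "\<dots> = - ii" by simp
  finally show ?thesis .
qed

lemma frob: "(to_ac (x::'a) * ii + to_ac y) ^ p = - to_ac x * ii + to_ac y"
proof -
  have "(to_ac x * ii + to_ac y) ^ p = (to_ac x * ii) ^ p + to_ac y ^ p"
    by (rule freshmans_dream) (use char_L p_prime in auto)
  also have "\<dots> = to_ac (x ^ p) * ii ^ p + to_ac (y ^ p)" by (simp add: power_mult_distrib)
  also have "\<dots> = - to_ac x * ii + to_ac y" using pow_p ii_pow_p by simp
  finally show ?thesis .
qed

lemma pow_p1: "(to_ac (x::'a) * ii + to_ac y) ^ (p + 1) = to_ac (x * x + y * y)"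
proof -
  have "(to_ac (x::'a) * ii + to_ac y) ^ (p + 1) = (- to_ac x * ii + to_ac y) * (to_ac x * ii + to_ac y)"
    using frob by simp
  also have "\<dots> = to_ac y * to_ac y - to_ac x * to_ac x * (ii * ii)" by (simp add: algebra_simps)
  also have "\<dots> = to_ac (x * x + y * y)" using ii_sq[where ?'a='a] by simp
  finally show ?thesis .
qed

lemma ii_inj: "to_ac (a::'a) + to_ac c * ii = to_ac a' + to_ac c' * ii \<longleftrightarrow> a = a' \<and> c = c'"
proof
  assume h: "to_ac (a::'a) + to_ac c * ii = to_ac a' + to_ac c' * ii"
  show "a = a' \<and> c = c'"
  proof (cases "c = c'")
    case True then show ?thesis using h by simp
  next
    case False
    have "to_ac (c - c') * ii = to_ac (a' - a)" using h by (simp add: algebra_simps)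
    then have "ii = to_ac ((a' - a) / (c - c'))" using False
      by (simp add: field_simps)
    then show ?thesis using ii_notin by blast
  qed
qed simp

end


lemma mat22_mult:
  assumes "A \<in> carrier_mat 2 2" "B \<in> carrier_mat 2 2" "i < 2" "j < 2"
  shows "(A * B) $$ (i, j) = A $$ (i, 0) * B $$ (0, j) + A $$ (i, 1) * B $$ (1, j)"
  using assms by (simp add: scalar_prod_def numeral_2_eq_2 row_def col_def)

lemma sp2: "dim_vec w = 2 \<Longrightarrow> v \<bullet> w = v $ 0 * w $ 0 + v $ 1 * w $ 1"
  by (simp add: scalar_prod_def numeral_2_eq_2)

definition rotm :: "'a::field \<Rightarrow> 'a \<Rightarrow> 'a mat" where
  "rotm a c = mat 2 2 (\<lambda>(i, j). if i = 0 then (if j = 0 then a else - c) else (if j = 0 then c else a))"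

definition refm :: "'a::field \<Rightarrow> 'a \<Rightarrow> 'a mat" where
  "refm a c = mat 2 2 (\<lambda>(i, j). if i = 0 then (if j = 0 then a else c) else (if j = 0 then c else - a))"

definition circ :: "('a::field \<times> 'a) set" where
  "circ = {(a, c). a * a + c * c = 1}"

lemma rotm_idx [simp]: "rotm a c $$ (0,0) = a" "rotm a c $$ (0,1) = - c" "rotm a c $$ (1,0) = c" "rotm a c $$ (1,1) = a"
  "rotm a c \<in> carrier_mat 2 2"
  by (auto simp: rotm_def)

lemma rotm_idx2 [simp]: "rotm a c $$ (0,Suc 0) = - c" "rotm a c $$ (Suc 0,0) = c" "rotm a c $$ (Suc 0,Suc 0) = a"
  by (auto simp: rotm_def)

lemma refm_idx [simp]: "refm a c $$ (0,0) = a" "refm a c $$ (0,1) = c" "refm a c $$ (1,0) = c" "refm a c $$ (1,1) = - a"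
  "refm a c \<in> carrier_mat 2 2"
  by (auto simp: refm_def)

lemma refm_idx2 [simp]: "refm a c $$ (0,Suc 0) = c" "refm a c $$ (Suc 0,0) = c" "refm a c $$ (Suc 0,Suc 0) = - a"
  by (auto simp: refm_def)

lemma mat22_eqI:
  assumes "A \<in> carrier_mat 2 2" "B \<in> carrier_mat 2 2"
    "A $$ (0,0) = B $$ (0,0)" "A $$ (0,1) = B $$ (0,1)" "A $$ (1,0) = B $$ (1,0)" "A $$ (1,1) = B $$ (1,1)"
  shows "A = B"
proof (rule eq_matI)
  fix i j assume "i < dim_row B" "j < dim_col B"
  then have "i < 2" "j < 2" using assms by auto
  then have "i = 0 \<or> i = 1" "j = 0 \<or> j = 1" by auto
  then show "A $$ (i, j) = B $$ (i, j)" using assms by auto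
qed (use assms in auto)

lemma O2_mem:
  assumes "g \<in> carrier_mat 2 2"
    "g $$ (0,0) * g $$ (0,0) + g $$ (1,0) * g $$ (1,0) = 1"
    "g $$ (0,1) * g $$ (0,1) + g $$ (1,1) * g $$ (1,1) = 1"
    "g $$ (0,0) * g $$ (0,1) + g $$ (1,0) * g $$ (1,1) = 0"
    "g $$ (0,0) * g $$ (1,0) + g $$ (0,1) * g $$ (1,1) = 0"
    "g $$ (0,0) * g $$ (0,0) + g $$ (0,1) * g $$ (0,1) = 1"
    "g $$ (1,0) * g $$ (1,0) + g $$ (1,1) * g $$ (1,1) = 1"
  shows "g \<in> O2"
proof -
  have tc: "transpose_mat g \<in> carrier_mat 2 2" using assms by simp
  have 1: "transpose_mat g * g = 1\<^sub>m 2"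
    by (rule mat22_eqI) (use assms tc in \<open>auto simp: sp2 mult.commute\<close>)
  have 2: "g * transpose_mat g = 1\<^sub>m 2"
    by (rule mat22_eqI) (use assms tc in \<open>auto simp: sp2 mult.commute\<close>)
  have "invertible_mat g"
    unfolding invertible_mat_def inverts_mat_def using 1 2 assms tc by auto
  then show ?thesis unfolding O2_def using 1 assms by auto
qed

lemma rotm_O2: "(a, c) \<in> circ \<Longrightarrow> rotm a c \<in> O2"
  by (rule O2_mem) (auto simp: circ_def algebra_simps)

lemma refm_O2: "(a, c) \<in> circ \<Longrightarrow> refm a c \<in> O2"
  by (rule O2_mem) (auto simp: circ_def algebra_simps)

lemma O2_cases:
  assumes "g \<in> (O2 :: 'a::field mat set)"
  obtains a c where "(a, c) \<in> circ" "g = rotm a c" | a c where "(a, c) \<in> circ" "g = refm a c"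
proof -
  have g: "g \<in> carrier_mat 2 2" and e: "transpose_mat g * g = 1\<^sub>m 2" using assms by (auto simp: O2_def)
  have tc: "transpose_mat g \<in> carrier_mat 2 2" using g by simp
  define a where "a = g $$ (0,0)"
  define b where "b = g $$ (0,1)"
  define c where "c = g $$ (1,0)"
  define d where "d = g $$ (1,1)"
  have e00: "a * a + c * c = 1"
    using arg_cong[OF e, of "\<lambda>M. M $$ (0,0)"] g tc by (simp add: sp2 a_def c_def)
  have e01: "a * b + c * d = 0"
    using arg_cong[OF e, of "\<lambda>M. M $$ (0,1)"] g tc by (simp add: sp2 a_def b_def c_def d_def)
  have e11: "b * b + d * d = 1"
    using arg_cong[OF e, of "\<lambda>M. M $$ (1,1)"] g tc by (simp add: sp2 b_def d_def)
  define l where "l = a * d - b * c"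
  have hb: "b = - l * c"
  proof -
    have "b = b * (a * a + c * c)" using e00 by simp
    also have "\<dots> = a * (a * b + c * d) - c * l" by (simp add: algebra_simps l_def)
    also have "\<dots> = - l * c" using e01 by simp
    finally show ?thesis .
  qed
  have hd: "d = l * a"
  proof -
    have "d = d * (a * a + c * c)" using e00 by simp
    also have "\<dots> = a * l + c * (a * b + c * d)" by (simp add: algebra_simps l_def)
    also have "\<dots> = l * a" using e01 by simp
    finally show ?thesis .
  qed
  have "l * l = 1"
  proof -
    have "1 = b * b + d * d" using e11 by simp
    also have "\<dots> = l * l * (a * a + c * c)" using hb hd by (simp add: algebra_simps)
    finally show ?thesis using e00 by simp
  qed
  then have "(l - 1) * (l + 1) = 0" by (simp add: algebra_simps)
  then have "l = 1 \<or> l = -1" by (auto simp: eq_neg_iff_add_eq_0)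
  moreover have ac: "(a, c) \<in> circ" using e00 by (simp add: circ_def)
  ultimately show ?thesis
  proof (elim disjE)
    assume "l = 1"
    then have "g = rotm a c" by (intro mat22_eqI) (use g hb hd in \<open>auto simp: a_def b_def c_def d_def\<close>)
    then show ?thesis using that ac by blast
  next
    assume "l = -1"
    then have "g = refm a c" by (intro mat22_eqI) (use g hb hd in \<open>auto simp: a_def b_def c_def d_def\<close>)
    then show ?thesis using that ac by blast
  qed
qed

lemma O2_row: "g \<in> (O2 :: 'a::field mat set) \<Longrightarrow> g $$ (0,0) * g $$ (0,0) + g $$ (0,1) * g $$ (0,1) = 1"
  by (erule O2_cases) (auto simp: circ_def)


lemma O2_split: "(O2 :: 'a::field mat set) = (\<lambda>(a, c). rotm a c) ` circ \<union> (\<lambda>(a, c). refm a c) ` circ"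
  apply (rule equalityI)
   apply (rule subsetI)
   apply (erule O2_cases)
    apply force
   apply force
  using rotm_O2 refm_O2 apply auto
  done

lemma inj_rotm: "inj_on (\<lambda>(a, c). rotm a c) S"
proof (rule inj_onI, clarify)
  fix a c a' c' :: 'a assume "rotm a c = rotm a' c'"
  then have "rotm a c $$ (0,0) = rotm a' c' $$ (0,0)" "rotm a c $$ (1,0) = rotm a' c' $$ (1,0)" by auto
  then show "a = a' \<and> c = c'" by simp
qed

lemma inj_refm: "inj_on (\<lambda>(a, c). refm a c) S"
proof (rule inj_onI, clarify)
  fix a c a' c' :: 'a assume "refm a c = refm a' c'"
  then have "refm a c $$ (0,0) = refm a' c' $$ (0,0)" "refm a c $$ (1,0) = refm a' c' $$ (1,0)" by auto
  then show "a = a' \<and> c = c'" by simp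
qed

lemma poly_vanish:
  fixes d :: "nat \<Rightarrow> 'b::idom"
  assumes J: "finite J" and inj: "inj_on ff J" and bnd: "\<forall>j\<in>J. ff j \<le> N"
    and XS: "finite XS" "card XS > N" and van: "\<forall>x\<in>XS. (\<Sum>j\<in>J. d j * x ^ ff j) = 0"
  shows "\<forall>j\<in>J. d j = 0"
proof -
  define Q where "Q = (\<Sum>j\<in>J. Polynomial.monom (d j) (ff j))"
  have pQ: "Polynomial.poly Q x = (\<Sum>j\<in>J. d j * x ^ ff j)" for x
    unfolding Q_def by (simp add: poly_sum poly_monom)
  have cQ: "Polynomial.coeff Q i = (\<Sum>j\<in>J. if ff j = i then d j else 0)" for i
    unfolding Q_def by (simp add: coeff_sum coeff_monom)
  have Q0: "Q = 0"
  proof (rule ccontr)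
    assume "Q \<noteq> 0"
    have "Polynomial.degree Q \<le> N"
    proof (rule degree_le, intro allI impI)
      fix i assume "N < i"
      then show "Polynomial.coeff Q i = 0" unfolding cQ using bnd by (intro sum.neutral) auto
    qed
    moreover have "card XS \<le> card {x. Polynomial.poly Q x = 0}"
      by (rule card_mono) (use poly_roots_finite[OF \<open>Q \<noteq> 0\<close>] van pQ in auto)
    moreover have "card {x. Polynomial.poly Q x = 0} \<le> Polynomial.degree Q"
      by (rule card_poly_roots_bound) fact
    ultimately show False using XS by linarith
  qed
  show ?thesis
  proof
    fix j0 assume j0: "j0 \<in> J"
    have "Polynomial.coeff Q (ff j0) = (\<Sum>j\<in>J. if j = j0 then d j else 0)"
      unfolding cQ by (rule sum.cong) (use inj j0 in \<open>auto dest: inj_onD\<close>)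
    also have "\<dots> = d j0" using J j0 by simp
    finally show "d j0 = 0" using Q0 by simp
  qed
qed

context ffield
begin

lemma circ_fin: "finite (circ :: ('a \<times> 'a) set)"
proof -
  have "finite (UNIV :: ('a \<times> 'a) set)" using fin by (simp add: finite_Prod_UNIV)
  then show ?thesis by (rule finite_subset[rotated]) simp
qed

lemma card_O2: "card (O2 :: 'a mat set) = 2 * card (circ :: ('a \<times> 'a) set)"
proof -
  have disj: "(\<lambda>(a, c). rotm a c) ` circ \<inter> (\<lambda>(a, c). refm a c) ` (circ :: ('a \<times> 'a) set) = {}"
  proof (rule ccontr)
    assume "\<not> ?thesis"
    then obtain a c a' c' :: 'a where ac: "(a, c) \<in> circ" and e: "rotm a c = refm a' c'" by auto
    have "rotm a c $$ (0,0) = refm a' c' $$ (0,0)" "rotm a c $$ (1,1) = refm a' c' $$ (1,1)"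
      "rotm a c $$ (0,1) = refm a' c' $$ (0,1)" "rotm a c $$ (1,0) = refm a' c' $$ (1,0)"
      using e by auto
    then have "a = a'" "a = - a'" "- c = c'" "c = c'" by auto
    then have "2 * a = 0" "2 * c = 0" by auto
    then have "a = 0" "c = 0" using two_ne0 by auto
    then show False using ac by (simp add: circ_def)
  qed
  have "card (O2 :: 'a mat set) = card ((\<lambda>(a, c). rotm a c) ` (circ :: ('a \<times> 'a) set)) + card ((\<lambda>(a, c). refm a c) ` (circ :: ('a \<times> 'a) set))"
    unfolding O2_split by (subst card_Un_disjoint) (use circ_fin disj in auto)
  also have "\<dots> = 2 * card (circ :: ('a \<times> 'a) set)"
    using card_image[OF inj_rotm[where S="circ :: ('a \<times> 'a) set"]]
      card_image[OF inj_refm[where S="circ :: ('a \<times> 'a) set"]] by simp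
  finally show ?thesis .
qed

end


definition pt :: "nat \<Rightarrow> 'a::field alg_closure" where
  "pt k = (if k = 0 \<or> k = 2 then ii else if k = 1 \<or> k = 3 then 1 else 0)"

lemma sum2: "(\<Sum>j<2. f j) = f 0 + f (1::nat)"
  by (simp add: numeral_2_eq_2)

lemma ev_fpoly: "ev \<rho> (fpoly p j) = (if j \<le> p + 1 then (\<rho> 0 * \<rho> 2 + \<rho> 1 * \<rho> 3) ^ j
   else (\<Sum>k\<in>O2. (to_ac (k $$ (0,0)) * \<rho> 0 + to_ac (k $$ (0,1)) * \<rho> 1) ^ (p + 1 - (j - (p + 1)))
      * (to_ac (k $$ (0,0)) * \<rho> 2 + to_ac (k $$ (0,1)) * \<rho> 3) ^ (j - (p + 1))))"
  unfolding fpoly_def u_inv_def Tr_def Let_def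
  by (simp add: ev_power ev_add ev_mult ev_mvar ev_sum ev_act_xy sum2 numeral_3_eq_3 numeral_2_eq_2)

lemma entry_gen: "ev pt (act_x g (fpoly p j)) =
  (let r0 = to_ac (g $$ (0,0)) * ii + to_ac (g $$ (0,1)); r1 = to_ac (g $$ (1,0)) * ii + to_ac (g $$ (1,1)) in
  (if j \<le> p + 1 then (r0 * ii + r1) ^ j
   else (\<Sum>k\<in>O2. (to_ac (k $$ (0,0)) * r0 + to_ac (k $$ (0,1)) * r1) ^ (p + 1 - (j - (p + 1)))
      * (to_ac (k $$ (0,0)) * ii + to_ac (k $$ (0,1))) ^ (j - (p + 1)))))"
  unfolding ev_act_x ev_fpoly Let_def
  by (simp add: sum2 pt_def)

context ffield
begin

lemma of_nat_p_L: "(of_nat p :: 'a alg_closure) = 0"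
  using char_L by (metis of_nat_CHAR)

lemma entry_rot_u:
  fixes a c :: 'a
  assumes "j \<le> p + 1"
  shows "ev pt (act_x (rotm a c) (fpoly p j)) = (0 :: 'a alg_closure) ^ j"
proof -
  have "(to_ac a * ii - to_ac c) * ii + (to_ac c * ii + to_ac a) = to_ac a * (ii * ii + 1 :: 'a alg_closure)"
    by (simp add: algebra_simps)
  also have "\<dots> = 0" using ii_sq[where ?'a='a] by simp
  finally show ?thesis using assms unfolding entry_gen Let_def by (simp add: to_ac_minus)
qed

lemma entry_rot_T:
  fixes a c :: 'a
  assumes "p + 1 < j" and "j < 2 * p + 2" and cO2: "card (O2 :: 'a mat set) = 2 * p + 2"
  shows "ev pt (act_x (rotm a c) (fpoly p j)) = 2 * (to_ac a + to_ac c * ii) ^ (2 * p + 2 - j)"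
proof -
  define z where "z = to_ac a + to_ac c * (ii :: 'a alg_closure)"
  have r0: "to_ac a * ii - to_ac c = z * ii"
    unfolding z_def by (simp add: algebra_simps ii_sq2)
  have r1: "to_ac c * ii + to_ac a = z" unfolding z_def by (simp add: algebra_simps)
  have A: "p + 1 - (j - (p + 1)) = 2 * p + 2 - j" using assms by simp
  have hterm: "(to_ac (k $$ (0,0)) * (z * ii) + to_ac (k $$ (0,1)) * z) ^ (2 * p + 2 - j)
      * (to_ac (k $$ (0,0)) * ii + to_ac (k $$ (0,1))) ^ (j - (p + 1)) = z ^ (2 * p + 2 - j)"
    if k: "k \<in> O2" for k :: "'a mat"
  proof -
    define w where "w = to_ac (k $$ (0,0)) * ii + to_ac (k $$ (0,1))"
    have "to_ac (k $$ (0,0)) * (z * ii) + to_ac (k $$ (0,1)) * z = z * w"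
      unfolding w_def by (simp add: algebra_simps)
    then have "(to_ac (k $$ (0,0)) * (z * ii) + to_ac (k $$ (0,1)) * z) ^ (2 * p + 2 - j)
      * (to_ac (k $$ (0,0)) * ii + to_ac (k $$ (0,1))) ^ (j - (p + 1))
      = z ^ (2 * p + 2 - j) * (w ^ (2 * p + 2 - j) * w ^ (j - (p + 1)))"
      unfolding w_def by (simp add: power_mult_distrib mult_ac)
    also have "w ^ (2 * p + 2 - j) * w ^ (j - (p + 1)) = w ^ (p + 1)"
      using assms by (simp add: power_add[symmetric])
    also have "\<dots> = to_ac (k $$ (0,0) * k $$ (0,0) + k $$ (0,1) * k $$ (0,1))"
      unfolding w_def by (rule pow_p1)
    also have "\<dots> = 1" using O2_row[OF k] by simp
    finally show ?thesis by simp
  qed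
  have "ev pt (act_x (rotm a c) (fpoly p j)) = (\<Sum>k\<in>(O2 :: 'a mat set).
     (to_ac (k $$ (0,0)) * (z * ii) + to_ac (k $$ (0,1)) * z) ^ (2 * p + 2 - j)
      * (to_ac (k $$ (0,0)) * ii + to_ac (k $$ (0,1))) ^ (j - (p + 1)))"
    unfolding entry_gen Let_def using assms(1) by (simp add: r0 r1 A mult_2)
  also have "\<dots> = (\<Sum>k\<in>(O2 :: 'a mat set). z ^ (2 * p + 2 - j))"
    by (rule sum.cong[OF refl]) (rule hterm)
  also have "\<dots> = of_nat (2 * p + 2) * z ^ (2 * p + 2 - j)" using cO2 by simp
  also have "(of_nat (2 * p + 2) :: 'a alg_closure) = 2" using of_nat_p_L by simp
  finally show ?thesis unfolding z_def .
qed

lemma entry_ref_u: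
  fixes a c :: 'a
  assumes "j \<le> p + 1"
  shows "ev pt (act_x (refm a c) (fpoly p j)) = (- 2 * (to_ac a - to_ac c * ii)) ^ j"
proof -
  have "ev pt (act_x (refm a c) (fpoly p j)) = ((to_ac a * ii + to_ac c) * ii + (to_ac c * ii - to_ac a)) ^ j"
    unfolding entry_gen Let_def using assms by simp
  also have "(to_ac a * ii + to_ac c) * ii + (to_ac c * ii - to_ac a) = (- 2 * (to_ac a - to_ac c * ii) :: 'a alg_closure)"
    by (simp add: algebra_simps ii_sq2)
  finally show ?thesis .
qed

end


context ffield
begin

lemma two_L: "(2 :: 'a alg_closure) \<noteq> 0"
proof -
  have "(2 :: 'a alg_closure) = to_ac 2" by simp
  then show ?thesis using two_ne0 by (metis to_ac_eq_0_iff)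
qed

lemma main_ne0:
  fixes h :: "nat \<Rightarrow> 'a mat"
  assumes hb: "bij_betw h {0..<2 * p + 2} (O2 :: 'a mat set)"
  shows "det (map_mat (ev pt) (mat (2 * p + 2) (2 * p + 2) (\<lambda>(i, j). act_x (h i) (fpoly p j)))) \<noteq> 0"
    (is "det ?M' \<noteq> 0")
proof
  let ?n = "2 * p + 2"
  have cO2: "card (O2 :: 'a mat set) = 2 * p + 2"
    using bij_betw_same_card[OF hb] by simp
  have ccirc: "card (circ :: ('a \<times> 'a) set) = p + 1"
    using cO2 card_O2 by simp
  have Mc: "?M' \<in> carrier_mat ?n ?n" by simp
  assume "det ?M' = 0"
  then obtain v where v: "v \<in> carrier_vec ?n" "v \<noteq> 0\<^sub>v ?n" "?M' *\<^sub>v v = 0\<^sub>v ?n"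
    using det_0_iff_vec_prod_zero[OF Mc] by blast
  have rowg: "(\<Sum>j<?n. ev pt (act_x g (fpoly p j)) * v $ j) = 0" if g: "g \<in> O2" for g
  proof -
    have "g \<in> h ` {0..<?n}" using g hb by (simp add: bij_betw_def)
    then obtain r where r0: "r \<in> {0..<?n}" "h r = g" by (rule imageE) simp
    then have r: "r < ?n" "h r = g" by auto
    have "(?M' *\<^sub>v v) $ r = 0" using v(3) r by simp
    then have "row ?M' r \<bullet> v = 0" using r by simp
    moreover have "row ?M' r \<bullet> v = (\<Sum>j<?n. ev pt (act_x g (fpoly p j)) * v $ j)"
      unfolding scalar_prod_def using v(1) r by (auto simp: lessThan_atLeast0 intro!: sum.cong)
    ultimately show ?thesis by simp
  qed
  define J where "J = {0} \<union> {p + 2..<?n}"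
  define d where "d j = (if j = 0 then v $ 0 else 2 * v $ j)" for j
  define ph where "ph j = (if j = 0 then 0 else 2 * p + 2 - j)" for j
  have step1: "\<forall>j\<in>J. d j = 0"
  proof (rule poly_vanish[where N = p and XS = "(\<lambda>(a, c). to_ac a + to_ac c * ii) ` circ"])
    show "finite J" unfolding J_def by simp
    show "inj_on ph J" unfolding J_def ph_def by (rule inj_onI) auto
    show "\<forall>j\<in>J. ph j \<le> p" unfolding J_def ph_def by auto
    show "finite ((\<lambda>(a, c). to_ac a + to_ac c * ii) ` (circ :: ('a \<times> 'a) set))"
      using circ_fin by simp
    have "inj_on (\<lambda>(a, c). to_ac a + to_ac c * (ii :: 'a alg_closure)) (circ :: ('a \<times> 'a) set)"
      by (rule inj_onI) (auto simp: ii_inj)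
    then show "card ((\<lambda>(a, c). to_ac a + to_ac c * ii) ` (circ :: ('a \<times> 'a) set)) > p"
      using ccirc by (simp add: card_image)
    show "\<forall>x\<in>(\<lambda>(a, c). to_ac a + to_ac c * ii) ` circ. (\<Sum>j\<in>J. d j * x ^ ph j) = 0"
    proof clarify
      fix a c :: 'a assume ac: "(a, c) \<in> circ"
      let ?z = "to_ac a + to_ac c * ii"
      have "(\<Sum>j<?n. ev pt (act_x (rotm a c) (fpoly p j)) * v $ j) = 0"
        using rowg[OF rotm_O2[OF ac]] .
      moreover have "(\<Sum>j<?n. ev pt (act_x (rotm a c) (fpoly p j)) * v $ j) = (\<Sum>j\<in>J. d j * ?z ^ ph j)"
      proof (rule sum.mono_neutral_cong_right)
        show "finite {..<?n}" by simp
        show "J \<subseteq> {..<?n}" unfolding J_def by auto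
        show "\<forall>j\<in>{..<?n} - J. ev pt (act_x (rotm a c) (fpoly p j)) * v $ j = 0"
        proof
          fix j assume "j \<in> {..<?n} - J"
          then have "1 \<le> j" "j \<le> p + 1" unfolding J_def by auto
          then show "ev pt (act_x (rotm a c) (fpoly p j)) * v $ j = 0"
            using entry_rot_u[of j a c] by simp
        qed
        show "ev pt (act_x (rotm a c) (fpoly p j)) * v $ j = d j * ?z ^ ph j" if "j \<in> J" for j
        proof (cases "j = 0")
          case True then show ?thesis using entry_rot_u[of 0 a c] by (simp add: d_def ph_def)
        next
          case False
          then have "p + 1 < j" "j < ?n" using that unfolding J_def by auto
          then show ?thesis using entry_rot_T[of j a c] cO2 False by (simp add: d_def ph_def mult_ac)
        qed
      qed
      ultimately show "(\<Sum>j\<in>J. d j * ?z ^ ph j) = 0" by simp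
    qed
  qed
  have v0: "v $ j = 0" if "j \<in> J" for j
  proof -
    have "d j = 0" using step1 that by blast
    then show ?thesis using two_L by (auto simp: d_def split: if_splits)
  qed
  define J2 where "J2 = {1..p + 1}"
  have step2: "\<forall>j\<in>J2. v $ j = 0"
  proof (rule poly_vanish[where N = p and XS = "(\<lambda>(a, c). - 2 * (to_ac a - to_ac c * ii)) ` circ"
        and ff = "\<lambda>j. j - 1"])
    show "finite J2" unfolding J2_def by simp
    show "inj_on (\<lambda>j. j - 1) J2" unfolding J2_def by (rule inj_onI) auto
    show "\<forall>j\<in>J2. j - 1 \<le> p" unfolding J2_def by auto
    show "finite ((\<lambda>(a, c). - 2 * (to_ac a - to_ac c * ii)) ` (circ :: ('a \<times> 'a) set))"
      using circ_fin by simp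
    have "inj_on (\<lambda>(a, c). - 2 * (to_ac a - to_ac c * (ii :: 'a alg_closure))) (circ :: ('a \<times> 'a) set)"
    proof (rule inj_onI, clarify)
      fix a c a' c' :: 'a
      assume e: "- 2 * (to_ac a - to_ac c * ii) = - 2 * (to_ac a' - to_ac c' * (ii :: 'a alg_closure))"
      have n2: "(- 2 :: 'a alg_closure) \<noteq> 0" using two_L by simp
      have "to_ac a - to_ac c * ii = to_ac a' - to_ac c' * (ii :: 'a alg_closure)"
        using mult_left_cancel[OF n2] e by blast
      then have "to_ac a + to_ac (- c) * ii = to_ac a' + to_ac (- c') * (ii :: 'a alg_closure)" by simp
      then show "a = a' \<and> c = c'" by (simp only: ii_inj) simp
    qed
    then show "card ((\<lambda>(a, c). - 2 * (to_ac a - to_ac c * ii)) ` (circ :: ('a \<times> 'a) set)) > p"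
      using ccirc by (simp add: card_image)
    show "\<forall>x\<in>(\<lambda>(a, c). - 2 * (to_ac a - to_ac c * ii)) ` circ. (\<Sum>j\<in>J2. v $ j * x ^ (j - 1)) = 0"
    proof clarify
      fix a c :: 'a assume ac: "(a, c) \<in> circ"
      let ?m = "- 2 * (to_ac a - to_ac c * ii)"
      have mne: "?m \<noteq> 0"
      proof
        assume "?m = 0"
        then have "to_ac a + to_ac (- c) * ii = to_ac 0 + to_ac 0 * (ii :: 'a alg_closure)" using two_L by simp
        then have "a = 0" "c = 0" by (simp_all only: ii_inj) simp_all
        then show False using ac by (simp add: circ_def)
      qed
      have "(\<Sum>j<?n. ev pt (act_x (refm a c) (fpoly p j)) * v $ j) = 0"
        using rowg[OF refm_O2[OF ac]] .
      moreover have "(\<Sum>j<?n. ev pt (act_x (refm a c) (fpoly p j)) * v $ j) = (\<Sum>j\<in>J2. ?m * (v $ j * ?m ^ (j - 1)))"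
      proof (rule sum.mono_neutral_cong_right)
        show "finite {..<?n}" by simp
        show "J2 \<subseteq> {..<?n}" unfolding J2_def by auto
        show "\<forall>j\<in>{..<?n} - J2. ev pt (act_x (refm a c) (fpoly p j)) * v $ j = 0"
        proof
          fix j assume "j \<in> {..<?n} - J2"
          then have "j \<in> J" unfolding J_def J2_def by auto
          then show "ev pt (act_x (refm a c) (fpoly p j)) * v $ j = 0" using v0 by simp
        qed
        show "ev pt (act_x (refm a c) (fpoly p j)) * v $ j = ?m * (v $ j * ?m ^ (j - 1))" if "j \<in> J2" for j
        proof -
          have j: "1 \<le> j" "j \<le> p + 1" using that unfolding J2_def by auto
          then have "?m ^ j = ?m * ?m ^ (j - 1)" by (metis Suc_diff_le diff_Suc_1 power_Suc)
          then show ?thesis using entry_ref_u[of j a c] j by (simp add: mult_ac)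
        qed
      qed
      ultimately have "?m * (\<Sum>j\<in>J2. v $ j * ?m ^ (j - 1)) = 0" by (simp add: sum_distrib_left)
      then show "(\<Sum>j\<in>J2. v $ j * ?m ^ (j - 1)) = 0" using mne by simp
    qed
  qed
  have "v = 0\<^sub>v ?n"
  proof (rule eq_vecI)
    show "dim_vec v = dim_vec (0\<^sub>v ?n)" using v(1) by simp
    fix j assume "j < dim_vec (0\<^sub>v ?n)"
    then have "j < ?n" by simp
    then have "j \<in> J \<or> j \<in> J2" unfolding J_def J2_def by auto
    then show "v $ j = 0\<^sub>v ?n $ j" using v0 step2 \<open>j < ?n\<close> by auto
  qed
  then show False using v(2) by simp
qed

end

theorem lemma3p3:
  fixes p :: nat and h :: "nat \<Rightarrow> 'a::field mat"
  assumes "prime p" and "p mod 4 = 3"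
    and "card (UNIV :: 'a set) = p"
    and "bij_betw h {0..<2 * p + 2} (O2 :: 'a mat set)"
  shows "det (mat (2 * p + 2) (2 * p + 2) (\<lambda>(i, j). act_x (h i) (fpoly p j))) \<noteq> 0"
proof
  interpret ffield p "TYPE('a)" using assms(1-3) by unfold_locales
  let ?M = "mat (2 * p + 2) (2 * p + 2) (\<lambda>(i, j). act_x (h i) (fpoly p j))"
  assume "det ?M = 0"
  moreover have "det (map_mat (ev pt) ?M) = ev pt (det ?M)"
    by (rule comm_ring_hom.hom_det[OF ev_hom])
  ultimately have "det (map_mat (ev pt) ?M) = 0" by (simp add: ev_zero)
  then show False using main_ne0[OF assms(4)] by simp
qed

end
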